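(* Let $X_1,\dots,X_n$ be i.i.d. real random variables with a continuous distribution, with order statistics $X_{(1)}\ge\cdots\ge X_{(n)}$ and spacings $S_j:=X_{(j)}-X_{(j+1)}$. Let $\phi(x):=e^x-x-1$ and $\zeta(x):=e^x\phi(-x)=1+(x-1)e^x$. Then for all $\lambda\ge 0$: for $k\in\{1,\dots,n-1\}$, $$\operatorname{Ent}\big[e^{\lambda X_{(k)}}\big]\le k\,\mathbb{E}\big[e^{\lambda X_{(k+1)}}\zeta(\lambda S_k)\big];$$ for $k\in\{2,\dots,n\}$, $$\operatorname{Ent}\big[e^{-\lambda X_{(k)}}\big]\le (n-k+1)\,\mathbb{E}\big[e^{-\lambda X_{(k)}}\phi(-\lambda S_{k-1})\big].$$
   Context: For a non-negative random variable $Y$, $\operatorname{Ent}[Y]:=\mathbb{E}[Y\log Y]-\mathbb{E}[Y]\log\mathbb{E}[Y]$ (not Shannon entropy). Order statistics are sorted decreasingly, $X_{(1)}$ being the maximum. $S_{k-1}=X_{(k-1)}-X_{(k)}$. *)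

theory Defs
  imports "HOL-Probability.Probability"
begin

definition Ent :: "'a measure \<Rightarrow> ('a \<Rightarrow> real) \<Rightarrow> real" where
  "Ent M Y = (\<integral>\<omega>. Y \<omega> * ln (Y \<omega>) \<partial>M) - (\<integral>\<omega>. Y \<omega> \<partial>M) * ln (\<integral>\<omega>. Y \<omega> \<partial>M)"

text \<open>Order statistics of X 1, ..., X n sorted decreasingly: ord_stat n X k is X_(k),
  so ord_stat n X 1 is the maximum (for 1 <= k <= n).\<close>
definition ord_stat :: "nat \<Rightarrow> (nat \<Rightarrow> 'a \<Rightarrow> real) \<Rightarrow> nat \<Rightarrow> 'a \<Rightarrow> real" where
  "ord_stat n X k \<omega> = rev (sort (map (\<lambda>i. X i \<omega>) [1..<n+1])) ! (k - 1)"

definition spacing :: "nat \<Rightarrow> (nat \<Rightarrow> 'a \<Rightarrow> real) \<Rightarrow> nat \<Rightarrow> 'a \<Rightarrow> real" where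
  "spacing n X j \<omega> = ord_stat n X j \<omega> - ord_stat n X (j + 1) \<omega>"

definition phi :: "real \<Rightarrow> real" where
  "phi x = exp x - x - 1"

definition zeta :: "real \<Rightarrow> real" where
  "zeta x = exp x * phi (- x)"

end

theory Submission
  imports Defs "HOL-Probability.Probability"
begin


definition psi :: "real \<Rightarrow> real \<Rightarrow> real" where
  "psi a u = a * ln a - a * ln u - a + u"

lemma measurable_psi[measurable]:
  assumes [measurable]: "f \<in> borel_measurable M" "g \<in> borel_measurable M"
  shows "(\<lambda>x. psi (f x) (g x)) \<in> borel_measurable M"
  unfolding psi_def by measurable

lemma psi_nonneg: fixes a u :: real assumes "0 < a" "0 < u" shows "0 \<le> psi a u"
proof -
  have "ln (u/a) \<le> u/a - 1" using assms by (intro ln_le_minus_one) auto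
  then have "a * ln (u/a) \<le> a * (u/a - 1)" using assms by (intro mult_left_mono) auto
  moreover have "a * ln (u/a) = a * ln u - a * ln a" using assms by (simp add: ln_div algebra_simps)
  moreover have "a * (u/a - 1) = u - a" using assms by (simp add: field_simps)
  ultimately show ?thesis by (simp add: psi_def)
qed

lemma tangent_ineq: fixes a u c :: real assumes "0 < a" "0 < u" "0 < c"
  shows "a * (1 + ln c) - c * u \<le> a * ln a - a * ln u"
proof -
  have "ln (c*u/a) \<le> c*u/a - 1" using assms by (intro ln_le_minus_one) auto
  then have "a * ln (c*u/a) \<le> a * (c*u/a - 1)" using assms by (intro mult_left_mono) auto
  moreover have "a * ln (c*u/a) = a * ln c + a * ln u - a * ln a" using assms by (simp add: ln_div ln_mult algebra_simps)
  moreover have "a * (c*u/a - 1) = c * u - a" using assms by (simp add: field_simps)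
  ultimately show ?thesis by (simp add: algebra_simps)
qed

lemma (in prob_space) integral_pos_AE:
  fixes f :: "'a \<Rightarrow> real"
  assumes "integrable M f" "AE x in M. 0 < f x"
  shows "0 < integral\<^sup>L M f"
proof -
  have "0 \<le> integral\<^sup>L M f" using assms by (intro integral_nonneg_AE) auto
  moreover have "integral\<^sup>L M f \<noteq> 0"
  proof
    assume "integral\<^sup>L M f = 0"
    have nn: "AE x in M. 0 \<le> f x" using assms(2) by eventually_elim auto
    with \<open>integral\<^sup>L M f = 0\<close> have "AE x in M. f x = 0" using integral_nonneg_eq_0_iff_AE[OF assms(1) nn] by auto
    with assms(2) have "AE x in M. False" by eventually_elim auto
    then show False by simp
  qed
  ultimately show ?thesis by simp
qed

lemma (in prob_space) jensen_xlnx: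
  fixes a :: "'a \<Rightarrow> real"
  assumes a[measurable]: "integrable M a" and pos: "AE y in M. 0 < a y"
    and aln: "integrable M (\<lambda>y. a y * ln (a y))"
  shows "integral\<^sup>L M a * ln (integral\<^sup>L M a) \<le> (\<integral>y. a y * ln (a y) \<partial>M)"
proof -
  define \<alpha> where "\<alpha> = integral\<^sup>L M a"
  have ap: "0 < \<alpha>" unfolding \<alpha>_def using assms by (intro integral_pos_AE) auto
  have "AE y in M. a y * (1 + ln \<alpha>) - \<alpha> \<le> a y * ln (a y)"
    using pos by eventually_elim (use ap tangent_ineq[of _ 1 \<alpha>] in auto)
  then have "(\<integral>y. a y * (1 + ln \<alpha>) - \<alpha> \<partial>M) \<le> (\<integral>y. a y * ln (a y) \<partial>M)"
    by (intro integral_mono_AE) (auto simp: a aln)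
  also have "(\<integral>y. a y * (1 + ln \<alpha>) - \<alpha> \<partial>M) = \<alpha> * (1 + ln \<alpha>) - \<alpha>"
    using a by (simp add: \<alpha>_def prob_space)
  finally show ?thesis by (simp add: \<alpha>_def algebra_simps)
qed

lemma (in prob_space) logsum:
  fixes a u :: "'a \<Rightarrow> real"
  assumes a[measurable]: "integrable M a" and u[measurable]: "u \<in> borel_measurable M"
    and pos: "AE y in M. 0 < u y \<and> u y \<le> a y"
    and ps: "integrable M (\<lambda>y. psi (a y) (u y))"
  shows "integrable M u" "psi (integral\<^sup>L M a) (integral\<^sup>L M u) \<le> (\<integral>y. psi (a y) (u y) \<partial>M)"
proof -
  show ui: "integrable M u"
  proof (rule Bochner_Integration.integrable_bound[OF a u])
    show "AE x in M. norm (u x) \<le> norm (a x)" using pos by eventually_elim auto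
  qed
  define \<alpha> where "\<alpha> = integral\<^sup>L M a"
  define \<beta> where "\<beta> = integral\<^sup>L M u"
  have bp: "0 < \<beta>" unfolding \<beta>_def using ui pos by (intro integral_pos_AE) auto
  have apos: "AE y in M. 0 < a y" using pos by eventually_elim auto
  have ap: "0 < \<alpha>" unfolding \<alpha>_def using a apos by (intro integral_pos_AE) auto
  define c where "c = \<alpha> / \<beta>"
  have cp: "0 < c" using ap bp by (simp add: c_def)
  have lint: "integrable M (\<lambda>y. a y * ln (a y) - a y * ln (u y))"
  proof -
    have "integrable M (\<lambda>y. psi (a y) (u y) + a y - u y)" using ps a ui by auto
    then show ?thesis by (simp add: psi_def)
  qed
  have "AE y in M. a y * (1 + ln c) - c * u y \<le> a y * ln (a y) - a y * ln (u y)"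
    using pos by eventually_elim (use cp tangent_ineq in auto)
  then have "(\<integral>y. a y * (1 + ln c) - c * u y \<partial>M) \<le> (\<integral>y. a y * ln (a y) - a y * ln (u y) \<partial>M)"
    by (intro integral_mono_AE lint) (auto simp: a ui)
  also have "(\<integral>y. a y * (1 + ln c) - c * u y \<partial>M) = \<alpha> * (1 + ln c) - c * \<beta>"
    using a ui by (simp add: \<alpha>_def \<beta>_def)
  also have "\<dots> = \<alpha> * ln \<alpha> - \<alpha> * ln \<beta>"
    using ap bp by (simp add: c_def ln_div field_simps)
  finally have 1: "\<alpha> * ln \<alpha> - \<alpha> * ln \<beta> \<le> (\<integral>y. a y * ln (a y) - a y * ln (u y) \<partial>M)" .
  have "(\<integral>y. psi (a y) (u y) \<partial>M) = (\<integral>y. (a y * ln (a y) - a y * ln (u y)) - a y + u y \<partial>M)"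
    by (simp add: psi_def)
  also have "\<dots> = (\<integral>y. a y * ln (a y) - a y * ln (u y) \<partial>M) - \<alpha> + \<beta>"
    using lint a ui by (simp add: \<alpha>_def \<beta>_def)
  finally show "psi (integral\<^sup>L M a) (integral\<^sup>L M u) \<le> (\<integral>y. psi (a y) (u y) \<partial>M)"
    using 1 by (simp add: psi_def \<alpha>_def[symmetric] \<beta>_def[symmetric])
qed




context pair_prob_space begin

lemma sec_meas[measurable]:
  fixes F :: "'a \<times> 'b \<Rightarrow> real"
  assumes [measurable]: "F \<in> borel_measurable (M1 \<Otimes>\<^sub>M M2)"
  shows "(\<lambda>x. \<integral>y. F (x, y) \<partial>M2) \<in> borel_measurable M1"
  using M2.borel_measurable_lebesgue_integral[of "\<lambda>x y. F (x, y)" M1] by simp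

lemma H_props:
  fixes F :: "'a \<times> 'b \<Rightarrow> real"
  assumes Fm[measurable]: "F \<in> borel_measurable (M1 \<Otimes>\<^sub>M M2)"
    and Fpos: "AE z in M1 \<Otimes>\<^sub>M M2. 0 < F z"
    and Fi: "integrable (M1 \<Otimes>\<^sub>M M2) F"
    and Fl: "integrable (M1 \<Otimes>\<^sub>M M2) (\<lambda>z. F z * ln (F z))"
  shows "AE x in M1. 0 < (\<integral>y. F (x, y) \<partial>M2)"
    and "integrable M1 (\<lambda>x. \<integral>y. F (x, y) \<partial>M2)"
    and "integrable M1 (\<lambda>x. (\<integral>y. F (x, y) \<partial>M2) * ln (\<integral>y. F (x, y) \<partial>M2))"
proof -
  define H where "H = (\<lambda>x. \<integral>y. F (x, y) \<partial>M2)"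
  define G where "G = (\<lambda>x. \<integral>y. F (x, y) * ln (F (x, y)) \<partial>M2)"
  have Hm[measurable]: "H \<in> borel_measurable M1" unfolding H_def by measurable
  have sec: "AE x in M1. integrable M2 (\<lambda>y. F (x, y)) \<and> integrable M2 (\<lambda>y. F (x, y) * ln (F (x, y)))
       \<and> (AE y in M2. 0 < F (x, y))"
    using AE_integrable_fst'[OF Fi] AE_integrable_fst'[OF Fl] AE_pair[OF Fpos]
    by eventually_elim auto
  have Hp: "AE x in M1. 0 < H x"
    using sec by eventually_elim (auto simp: H_def intro!: M2.integral_pos_AE)
  then show "AE x in M1. 0 < (\<integral>y. F (x, y) \<partial>M2)" by (simp add: H_def)
  have Hi: "integrable M1 H" unfolding H_def using integrable_fst'[OF Fi] by simp
  then show "integrable M1 (\<lambda>x. \<integral>y. F (x, y) \<partial>M2)" by (simp add: H_def)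
  have Gi: "integrable M1 G" unfolding G_def using integrable_fst'[OF Fl] by simp
  have bnd: "AE x in M1. norm (H x * ln (H x)) \<le> norm (\<bar>G x\<bar> + \<bar>H x\<bar> + 1)"
    using sec Hp
  proof eventually_elim
    case (elim x)
    have up: "H x * ln (H x) \<le> G x"
      using elim M2.jensen_xlnx[of "\<lambda>y. F (x, y)"] by (simp add: H_def G_def)
    have "ln (1 / H x) \<le> 1 / H x - 1" using elim by (intro ln_le_minus_one) auto
    then have "H x * ln (1 / H x) \<le> H x * (1 / H x - 1)" using elim by (intro mult_left_mono) auto
    moreover have "H x * ln (1 / H x) = - (H x * ln (H x))" using elim by (simp add: ln_div)
    moreover have "H x * (1 / H x - 1) = 1 - H x" using elim by (simp add: field_simps)
    ultimately have lo: "H x - 1 \<le> H x * ln (H x)" by simp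
    have "0 \<le> \<bar>G x\<bar> + \<bar>H x\<bar> + 1" by simp
    then show ?case unfolding real_norm_def using up lo by (smt (verit))
  qed
  have int: "integrable M1 (\<lambda>x. \<bar>G x\<bar> + \<bar>H x\<bar> + 1)"
    by (intro Bochner_Integration.integrable_add Bochner_Integration.integrable_abs Gi Hi M1.integrable_const)
  have Hlm: "(\<lambda>x. H x * ln (H x)) \<in> borel_measurable M1" by measurable
  have "integrable M1 (\<lambda>x. H x * ln (H x))"
    by (rule Bochner_Integration.integrable_bound[OF int Hlm bnd])
  then show "integrable M1 (\<lambda>x. (\<integral>y. F (x, y) \<partial>M2) * ln (\<integral>y. F (x, y) \<partial>M2))"
    by (simp add: H_def)
qed

lemma V_props:
  fixes F U :: "'a \<times> 'b \<Rightarrow> real"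
  assumes Fm[measurable]: "F \<in> borel_measurable (M1 \<Otimes>\<^sub>M M2)"
    and Fi: "integrable (M1 \<Otimes>\<^sub>M M2) F"
    and Um[measurable]: "U \<in> borel_measurable (M1 \<Otimes>\<^sub>M M2)"
    and Upos: "AE z in M1 \<Otimes>\<^sub>M M2. 0 < U z \<and> U z \<le> F z"
    and Pi: "integrable (M1 \<Otimes>\<^sub>M M2) (\<lambda>z. psi (F z) (U z))"
  shows "AE x in M1. 0 < (\<integral>y. U (x, y) \<partial>M2) \<and> (\<integral>y. U (x, y) \<partial>M2) \<le> (\<integral>y. F (x, y) \<partial>M2)"
    and "integrable M1 (\<lambda>x. psi (\<integral>y. F (x, y) \<partial>M2) (\<integral>y. U (x, y) \<partial>M2))"
    and "(\<integral>x. psi (\<integral>y. F (x, y) \<partial>M2) (\<integral>y. U (x, y) \<partial>M2) \<partial>M1)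
          \<le> (\<integral>z. psi (F z) (U z) \<partial>(M1 \<Otimes>\<^sub>M M2))"
proof -
  define H where "H = (\<lambda>x. \<integral>y. F (x, y) \<partial>M2)"
  define V where "V = (\<lambda>x. \<integral>y. U (x, y) \<partial>M2)"
  define G where "G = (\<lambda>x. \<integral>y. psi (F (x, y)) (U (x, y)) \<partial>M2)"
  have Hm[measurable]: "H \<in> borel_measurable M1" unfolding H_def by measurable
  have Vm[measurable]: "V \<in> borel_measurable M1" unfolding V_def by measurable
  have sec: "AE x in M1. integrable M2 (\<lambda>y. F (x, y)) \<and> integrable M2 (\<lambda>y. psi (F (x, y)) (U (x, y)))
       \<and> (AE y in M2. 0 < U (x, y) \<and> U (x, y) \<le> F (x, y))"
    using AE_integrable_fst'[OF Fi] AE_integrable_fst'[OF Pi] AE_pair[OF Upos]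
    by eventually_elim auto
  have key: "AE x in M1. 0 < V x \<and> V x \<le> H x \<and> psi (H x) (V x) \<le> G x"
    using sec AE_space
  proof eventually_elim
    case (elim x)
    have ai: "integrable M2 (\<lambda>y. F (x, y))" and pii: "integrable M2 (\<lambda>y. psi (F (x, y)) (U (x, y)))"
      and aeu: "AE y in M2. 0 < U (x, y) \<and> U (x, y) \<le> F (x, y)" and xs: "x \<in> space M1"
      using elim by blast+
    have um: "(\<lambda>y. U (x, y)) \<in> borel_measurable M2" by (rule measurable_Pair2[OF Um xs])
    note L = M2.logsum[OF ai um aeu pii]
    have ui: "integrable M2 (\<lambda>y. U (x, y))" by (rule L(1))
    have ls: "psi (H x) (V x) \<le> G x" unfolding H_def V_def G_def by (rule L(2))
    have up: "AE y in M2. 0 < U (x, y)" using aeu by eventually_elim blast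
    have ule: "AE y in M2. U (x, y) \<le> F (x, y)" using aeu by eventually_elim blast
    have "0 < V x" unfolding V_def by (rule M2.integral_pos_AE[OF ui up])
    moreover have "V x \<le> H x" unfolding V_def H_def
      by (rule integral_mono_AE[OF ui ai ule])
    ultimately show ?case using ls by simp
  qed
  then show "AE x in M1. 0 < (\<integral>y. U (x, y) \<partial>M2) \<and> (\<integral>y. U (x, y) \<partial>M2) \<le> (\<integral>y. F (x, y) \<partial>M2)"
    unfolding V_def H_def by (rule eventually_mono) simp
  have Gi: "integrable M1 G" unfolding G_def using integrable_fst'[OF Pi] by simp
  have bnd: "AE x in M1. norm (psi (H x) (V x)) \<le> norm (G x)"
    using key
  proof eventually_elim
    case (elim x)
    then have "0 \<le> psi (H x) (V x)" by (intro psi_nonneg) auto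
    then show ?case using elim by simp
  qed
  have Ii: "integrable M1 (\<lambda>x. psi (H x) (V x))"
    by (rule Bochner_Integration.integrable_bound[OF Gi _ bnd]) measurable
  then show "integrable M1 (\<lambda>x. psi (\<integral>y. F (x, y) \<partial>M2) (\<integral>y. U (x, y) \<partial>M2))"
    by (simp add: H_def V_def)
  have "(\<integral>x. psi (H x) (V x) \<partial>M1) \<le> (\<integral>x. G x \<partial>M1)"
  proof (rule integral_mono_AE[OF Ii Gi])
    show "AE x in M1. psi (H x) (V x) \<le> G x" using key by (rule eventually_mono) simp
  qed
  also have "(\<integral>x. G x \<partial>M1) = (\<integral>z. psi (F z) (U z) \<partial>(M1 \<Otimes>\<^sub>M M2))"
    unfolding G_def using integral_fst'[OF Pi] by simp
  finally show "(\<integral>x. psi (\<integral>y. F (x, y) \<partial>M2) (\<integral>y. U (x, y) \<partial>M2) \<partial>M1)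
          \<le> (\<integral>z. psi (F z) (U z) \<partial>(M1 \<Otimes>\<^sub>M M2))" by (simp add: H_def V_def)
qed

lemma S3:
  fixes F U :: "'a \<times> 'b \<Rightarrow> real"
  assumes Fm[measurable]: "F \<in> borel_measurable (M1 \<Otimes>\<^sub>M M2)"
    and Fi: "integrable (M1 \<Otimes>\<^sub>M M2) F"
    and Fl: "integrable (M1 \<Otimes>\<^sub>M M2) (\<lambda>z. F z * ln (F z))"
    and Fpos: "AE z in M1 \<Otimes>\<^sub>M M2. 0 < F z"
    and Um[measurable]: "U \<in> borel_measurable (M1 \<Otimes>\<^sub>M M2)"
    and Upos: "AE z in M1 \<Otimes>\<^sub>M M2. 0 < U z \<and> U z \<le> F z"
    and Pi: "integrable (M1 \<Otimes>\<^sub>M M2) (\<lambda>z. psi (F z) (U z))"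
    and Uc: "\<And>x y y'. x \<in> space M1 \<Longrightarrow> y \<in> space M2 \<Longrightarrow> y' \<in> space M2 \<Longrightarrow> U (x, y) = U (x, y')"
  shows "(\<integral>z. F z * ln (F z) \<partial>(M1 \<Otimes>\<^sub>M M2))
           - (\<integral>x. (\<integral>y. F (x, y) \<partial>M2) * ln (\<integral>y. F (x, y) \<partial>M2) \<partial>M1)
         \<le> (\<integral>z. psi (F z) (U z) \<partial>(M1 \<Otimes>\<^sub>M M2))"
proof -
  define H where "H = (\<lambda>x. \<integral>y. F (x, y) \<partial>M2)"
  define G where "G = (\<lambda>x. \<integral>y. F (x, y) * ln (F (x, y)) \<partial>M2)"
  define K where "K = (\<lambda>x. \<integral>y. psi (F (x, y)) (U (x, y)) \<partial>M2)"
  have Hi: "integrable M1 (\<lambda>x. H x * ln (H x))"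
    using H_props[OF Fm Fpos Fi Fl] by (simp add: H_def)
  have Gi: "integrable M1 G" unfolding G_def using integrable_fst'[OF Fl] by simp
  have Ki: "integrable M1 K" unfolding K_def using integrable_fst'[OF Pi] by simp
  obtain y0 where y0: "y0 \<in> space M2" using M2.not_empty by blast
  have sec: "AE x in M1. integrable M2 (\<lambda>y. F (x, y)) \<and> integrable M2 (\<lambda>y. psi (F (x, y)) (U (x, y)))
       \<and> integrable M2 (\<lambda>y. F (x, y) * ln (F (x, y)))
       \<and> (AE y in M2. 0 < U (x, y) \<and> U (x, y) \<le> F (x, y))"
    using AE_integrable_fst'[OF Fi] AE_integrable_fst'[OF Pi] AE_integrable_fst'[OF Fl] AE_pair[OF Upos]
    by eventually_elim auto
  have key: "AE x in M1. G x - H x * ln (H x) \<le> K x"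
    using sec AE_space H_props(1)[OF Fm Fpos Fi Fl]
  proof eventually_elim
    case (elim x)
    define c where "c = U (x, y0)"
    have Ueq: "\<And>y. y \<in> space M2 \<Longrightarrow> U (x, y) = c" unfolding c_def using Uc elim y0 by blast
    have "AE y in M2. 0 < c" using elim by (auto elim!: eventually_mono simp: Ueq)
    then have cp: "0 < c" by simp
    have "K x = (\<integral>y. F (x, y) * ln (F (x, y)) - F (x, y) * ln c - F (x, y) + c \<partial>M2)"
      unfolding K_def by (rule Bochner_Integration.integral_cong) (auto simp: psi_def Ueq)
    also have "\<dots> = G x - H x * ln c - H x + c"
      using elim by (simp add: G_def H_def M2.prob_space)
    finally have "K x = G x - H x * ln c - H x + c" .
    moreover have "0 \<le> psi (H x) c" using elim cp by (intro psi_nonneg) (auto simp: H_def)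
    ultimately show ?case by (simp add: psi_def)
  qed
  have "(\<integral>x. G x - H x * ln (H x) \<partial>M1) \<le> (\<integral>x. K x \<partial>M1)"
    using key Gi Hi Ki by (intro integral_mono_AE) auto
  also have "(\<integral>x. G x - H x * ln (H x) \<partial>M1) = (\<integral>x. G x \<partial>M1) - (\<integral>x. H x * ln (H x) \<partial>M1)"
    using Gi Hi by simp
  also have "(\<integral>x. G x \<partial>M1) = (\<integral>z. F z * ln (F z) \<partial>(M1 \<Otimes>\<^sub>M M2))"
    unfolding G_def using integral_fst'[OF Fl] by simp
  also have "(\<integral>x. K x \<partial>M1) = (\<integral>z. psi (F z) (U z) \<partial>(M1 \<Otimes>\<^sub>M M2))"
    unfolding K_def using integral_fst'[OF Pi] by simp
  finally show ?thesis by (simp add: H_def)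
qed

end



lemma distr_upd:
  fixes M :: "'i \<Rightarrow> 'a measure"
  assumes ps: "\<And>i. prob_space (M i)" and fin: "finite I" and iI: "i \<notin> I"
  shows "distr (PiM I M \<Otimes>\<^sub>M M i) (PiM (insert i I) M) (\<lambda>(f, y). f(i := y)) = PiM (insert i I) M"
proof -
  interpret product_sigma_finite M
    by (simp add: product_sigma_finite_def ps prob_space_imp_sigma_finite)
  interpret I: finite_product_sigma_finite M I by standard (rule fin)
  interpret pair_sigma_finite "PiM I M" "M i" by standard
  let ?h = "(\<lambda>(f, y). f(i := y))"
  show ?thesis
  proof (rule PiM_eqI)
    show "finite (insert i I)" using fin by simp
    show "sets (distr (PiM I M \<Otimes>\<^sub>M M i) (PiM (insert i I) M) ?h) = sets (PiM (insert i I) M)" by simp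
    fix A assume A: "\<And>j. j \<in> insert i I \<Longrightarrow> A j \<in> sets (M j)"
    have "?h -` Pi\<^sub>E (insert i I) A \<inter> space (PiM I M \<Otimes>\<^sub>M M i) = Pi\<^sub>E I A \<times> A i"
      using A[THEN sets.sets_into_space] iI
      by (force simp: space_pair_measure space_PiM PiE_def Pi_iff extensional_def split: if_split_asm)
    then have "emeasure (distr (PiM I M \<Otimes>\<^sub>M M i) (PiM (insert i I) M) ?h) (Pi\<^sub>E (insert i I) A)
        = emeasure (PiM I M \<Otimes>\<^sub>M M i) (Pi\<^sub>E I A \<times> A i)"
      using A by (subst emeasure_distr) (auto intro!: sets_PiM_I_finite measurable_add_dim fin)
    also have "\<dots> = emeasure (PiM I M) (Pi\<^sub>E I A) * emeasure (M i) (A i)"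
      using A by (intro M.emeasure_pair_measure_Times sets_PiM_I_finite) (auto simp: fin)
    also have "\<dots> = (\<Prod>j\<in>insert i I. emeasure (M j) (A j))"
      using A fin iI by (simp add: I.measure_times mult.commute)
    finally show "emeasure (distr (PiM I M \<Otimes>\<^sub>M M i) (PiM (insert i I) M) ?h) (Pi\<^sub>E (insert i I) A)
        = (\<Prod>j\<in>insert i I. emeasure (M j) (A j))" .
  qed
qed


lemma Ent_empty:
  fixes M :: "'i \<Rightarrow> 'a measure"
  shows "Ent (PiM {} M) f = 0"
  by (simp add: Ent_def PiM_empty lebesgue_integral_count_space_finite)

lemma tens:
  fixes M :: "'i \<Rightarrow> 'a measure" and I :: "'i set"
  assumes ps: "\<And>i. prob_space (M i)" and fin: "finite I"
  shows "\<And>f u. f \<in> borel_measurable (PiM I M) \<Longrightarrow> (AE x in PiM I M. 0 < f x) \<Longrightarrow>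
     integrable (PiM I M) f \<Longrightarrow> integrable (PiM I M) (\<lambda>x. f x * ln (f x)) \<Longrightarrow>
     (\<And>j. j \<in> I \<Longrightarrow> u j \<in> borel_measurable (PiM I M)) \<Longrightarrow>
     (\<And>j. j \<in> I \<Longrightarrow> AE x in PiM I M. 0 < u j x \<and> u j x \<le> f x) \<Longrightarrow>
     (\<And>j. j \<in> I \<Longrightarrow> integrable (PiM I M) (\<lambda>x. psi (f x) (u j x))) \<Longrightarrow>
     (\<And>j x z. j \<in> I \<Longrightarrow> x \<in> space (PiM I M) \<Longrightarrow> z \<in> space (M j) \<Longrightarrow> u j (x(j := z)) = u j x) \<Longrightarrow>
     Ent (PiM I M) f \<le> (\<Sum>j\<in>I. \<integral>x. psi (f x) (u j x) \<partial>PiM I M)"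
  using fin
proof (induction I rule: finite_induct)
  case empty
  then show ?case by (simp add: Ent_empty)
next
  case (insert i I f u)
  interpret product_sigma_finite M
    by (simp add: product_sigma_finite_def ps prob_space_imp_sigma_finite)
  interpret PI: prob_space "PiM I M" by (intro prob_space_PiM ps)
  interpret Mi: prob_space "M i" by (rule ps)
  interpret pair_prob_space "PiM I M" "M i" by standard
  let ?P = "PiM (insert i I) M"
  let ?Q = "PiM I M \<Otimes>\<^sub>M M i"
  define h where "h = (\<lambda>(x::'i \<Rightarrow> 'a, y::'a). x(i := y))"
  have hm[measurable]: "h \<in> measurable ?Q ?P" unfolding h_def by (rule measurable_add_dim)
  have D: "distr ?Q ?P h = ?P" unfolding h_def by (rule distr_upd[OF ps insert(1,2)])
  note fm[measurable] = insert.prems(1)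
  have um[measurable]: "u j \<in> borel_measurable ?P" if "j \<in> insert i I" for j using insert.prems(5) that by blast
  define F where "F = (\<lambda>z. f (h z))"
  define U where "U = (\<lambda>j z. u j (h z))"
  have Fm[measurable]: "F \<in> borel_measurable ?Q" unfolding F_def by measurable
  have Um[measurable]: "U j \<in> borel_measurable ?Q" if "j \<in> insert i I" for j
    unfolding U_def using that by measurable
  have transI: "integrable ?Q (\<lambda>z. g (h z))" if "integrable ?P g" for g :: "_ \<Rightarrow> real"
    by (rule integrable_distr[OF hm]) (simp add: D that)
  have transE: "(\<integral>z. g (h z) \<partial>?Q) = (\<integral>x. g x \<partial>?P)" if [measurable]: "g \<in> borel_measurable ?P" for g :: "_ \<Rightarrow> real"
    using integral_distr[OF hm that] by (simp add: D)
  have transA: "AE z in ?Q. Pr (h z)" if "AE x in ?P. Pr x" for Pr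
    by (rule AE_distrD[OF hm]) (subst D, rule that)
  have Fpos: "AE z in ?Q. 0 < F z" unfolding F_def by (rule transA[OF insert.prems(2)])
  have Fi: "integrable ?Q F" unfolding F_def by (rule transI[OF insert.prems(3)])
  have Fl: "integrable ?Q (\<lambda>z. F z * ln (F z))" unfolding F_def by (rule transI[OF insert.prems(4)])
  have Upos: "AE z in ?Q. 0 < U j z \<and> U j z \<le> F z" if "j \<in> insert i I" for j
    unfolding U_def F_def by (rule transA[OF insert.prems(6)[OF that]])
  have Ui: "integrable ?Q (\<lambda>z. psi (F z) (U j z))" if "j \<in> insert i I" for j
    unfolding U_def F_def by (rule transI[OF insert.prems(7)[OF that]])
  have Upsi: "(\<integral>z. psi (F z) (U j z) \<partial>?Q) = (\<integral>x. psi (f x) (u j x) \<partial>?P)" if "j \<in> insert i I" for j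
    unfolding U_def F_def using that by (intro transE) measurable
  define H where "H = (\<lambda>x. \<integral>y. F (x, y) \<partial>M i)"
  define V where "V = (\<lambda>j x. \<integral>y. U j (x, y) \<partial>M i)"
  have HP: "AE x in PiM I M. 0 < H x" "integrable (PiM I M) H" "integrable (PiM I M) (\<lambda>x. H x * ln (H x))"
    using H_props[OF Fm Fpos Fi Fl] unfolding H_def by auto
  have Hm[measurable]: "H \<in> borel_measurable (PiM I M)" unfolding H_def by measurable
  have Vm: "V j \<in> borel_measurable (PiM I M)" if "j \<in> I" for j
    unfolding V_def by (rule sec_meas[OF Um]) (use that in simp)
  have hupd: "h (x, y) \<in> space ?P" if "x \<in> space (PiM I M)" "y \<in> space (M i)" for x y
    using measurable_space[OF hm, of "(x, y)"] that by (simp add: space_pair_measure)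
  have Vind: "V j (x(j := z)) = V j x" if j: "j \<in> I" and x: "x \<in> space (PiM I M)" and z: "z \<in> space (M j)" for j x z
  proof -
    have "j \<noteq> i" using j insert(2) by auto
    have "U j (x(j := z), y) = U j (x, y)" if y: "y \<in> space (M i)" for y
    proof -
      have "U j (x(j := z), y) = u j ((h (x, y))(j := z))"
        unfolding U_def h_def using \<open>j \<noteq> i\<close> by (simp add: fun_upd_twist)
      also have "\<dots> = u j (h (x, y))"
        using insert.prems(8)[of j "h (x, y)" z] j z hupd[OF x y] by blast
      finally show ?thesis by (simp add: U_def)
    qed
    then show ?thesis unfolding V_def by (intro Bochner_Integration.integral_cong) auto
  qed
  have VP: "(AE x in PiM I M. 0 < V j x \<and> V j x \<le> H x) \<and> integrable (PiM I M) (\<lambda>x. psi (H x) (V j x))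
      \<and> (\<integral>x. psi (H x) (V j x) \<partial>PiM I M) \<le> (\<integral>z. psi (F z) (U j z) \<partial>?Q)" if "j \<in> I" for j
    using V_props[OF Fm Fi Um[of j] Upos[of j] Ui[of j]] that unfolding H_def V_def by auto
  have IH: "Ent (PiM I M) H \<le> (\<Sum>j\<in>I. \<integral>x. psi (H x) (V j x) \<partial>PiM I M)"
    by (rule insert.IH[OF Hm HP(1) HP(2) HP(3) Vm]) (assumption, use VP in blast, use VP in blast, rule Vind)
  also have "\<dots> \<le> (\<Sum>j\<in>I. \<integral>x. psi (f x) (u j x) \<partial>?P)"
  proof (rule sum_mono)
    fix j assume j: "j \<in> I"
    then have j': "j \<in> insert i I" by simp
    have a: "(\<integral>x. psi (H x) (V j x) \<partial>PiM I M) \<le> (\<integral>z. psi (F z) (U j z) \<partial>?Q)" using VP[OF j] by blast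
    show "(\<integral>x. psi (H x) (V j x) \<partial>PiM I M) \<le> (\<integral>x. psi (f x) (u j x) \<partial>?P)"
      using a Upsi[OF j'] by simp
  qed
  finally have IH2: "Ent (PiM I M) H \<le> (\<Sum>j\<in>I. \<integral>x. psi (f x) (u j x) \<partial>?P)" .
  have Uc: "U i (x, y) = U i (x, y')" if x: "x \<in> space (PiM I M)" and y: "y \<in> space (M i)" and y': "y' \<in> space (M i)" for x y y'
  proof -
    have "U i (x, y) = u i ((h (x, y'))(i := y))" unfolding U_def h_def by simp
    also have "\<dots> = u i (h (x, y'))" using insert.prems(8)[of i "h (x, y')" y] y hupd[OF x y'] by blast
    finally show ?thesis by (simp add: U_def)
  qed
  have S: "(\<integral>z. F z * ln (F z) \<partial>?Q) - (\<integral>x. H x * ln (H x) \<partial>PiM I M) \<le> (\<integral>z. psi (F z) (U i z) \<partial>?Q)"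
    using S3[OF Fm Fi Fl Fpos Um[OF insertI1] Upos[OF insertI1] Ui[OF insertI1] Uc] unfolding H_def by simp
  have e1: "(\<integral>z. F z \<partial>?Q) = (\<integral>x. H x \<partial>PiM I M)" unfolding H_def using integral_fst'[OF Fi] by simp
  have e2: "(\<integral>z. F z \<partial>?Q) = (\<integral>x. f x \<partial>?P)" unfolding F_def by (rule transE) measurable
  have e3: "(\<integral>z. F z * ln (F z) \<partial>?Q) = (\<integral>x. f x * ln (f x) \<partial>?P)" unfolding F_def by (rule transE) measurable
  have "Ent ?P f = ((\<integral>z. F z * ln (F z) \<partial>?Q) - (\<integral>x. H x * ln (H x) \<partial>PiM I M)) + Ent (PiM I M) H"
    unfolding Ent_def e3[symmetric] e2[symmetric] e1 by simp
  also have "\<dots> \<le> (\<integral>x. psi (f x) (u i x) \<partial>?P) + (\<Sum>j\<in>I. \<integral>x. psi (f x) (u j x) \<partial>?P)"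
    using S IH2 Upsi[of i] by simp
  also have "\<dots> = (\<Sum>j\<in>insert i I. \<integral>x. psi (f x) (u j x) \<partial>?P)"
    using insert(1,2) by simp
  finally show ?case .
qed




definition kthJ :: "nat set \<Rightarrow> (nat \<Rightarrow> real) \<Rightarrow> nat \<Rightarrow> real" where
  "kthJ J v k = rev (sort (map v (sorted_list_of_set J))) ! (k - 1)"

lemma sorted_nth_count:
  fixes ys :: "real list"
  assumes s: "sorted ys" and k: "1 \<le> k" "k \<le> length ys" and P: "\<And>a b. P a \<Longrightarrow> a \<le> b \<Longrightarrow> P b"
  shows "P (ys ! (length ys - k)) \<longleftrightarrow> k \<le> card {i. i < length ys \<and> P (ys ! i)}"
proof
  let ?n = "length ys" let ?m = "length ys - k"
  assume Pm: "P (ys ! ?m)"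
  have "{?m..<?n} \<subseteq> {i. i < ?n \<and> P (ys ! i)}"
  proof
    fix i assume "i \<in> {?m..<?n}"
    then have "?m \<le> i" "i < ?n" by auto
    then have "ys ! ?m \<le> ys ! i" using s by (intro sorted_nth_mono) auto
    then show "i \<in> {i. i < ?n \<and> P (ys ! i)}" using Pm P \<open>i < ?n\<close> by blast
  qed
  then have "card {?m..<?n} \<le> card {i. i < ?n \<and> P (ys ! i)}" by (intro card_mono) auto
  then show "k \<le> card {i. i < ?n \<and> P (ys ! i)}" using k by simp
next
  let ?n = "length ys" let ?m = "length ys - k"
  assume c: "k \<le> card {i. i < ?n \<and> P (ys ! i)}"
  show "P (ys ! ?m)"
  proof (rule ccontr)
    assume nP: "\<not> P (ys ! ?m)"
    have "{i. i < ?n \<and> P (ys ! i)} \<subseteq> {Suc ?m..<?n}"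
    proof
      fix i assume i: "i \<in> {i. i < ?n \<and> P (ys ! i)}"
      show "i \<in> {Suc ?m..<?n}"
      proof (rule ccontr)
        assume "i \<notin> {Suc ?m..<?n}"
        then have "i \<le> ?m" using i by auto
        then have "ys ! i \<le> ys ! ?m" using s k by (intro sorted_nth_mono) auto
        then show False using i nP P by blast
      qed
    qed
    then have "card {i. i < ?n \<and> P (ys ! i)} \<le> card {Suc ?m..<?n}" by (intro card_mono) auto
    then show False using c k by simp
  qed
qed

lemma count_sort_map:
  assumes "finite J"
  shows "card {i. i < length (sort (map v (sorted_list_of_set J))) \<and> P (sort (map v (sorted_list_of_set J)) ! i)}
       = card {j\<in>J. P (v j)}"
proof -
  let ?L = "sorted_list_of_set J"
  have "card {i. i < length (sort (map v ?L)) \<and> P (sort (map v ?L) ! i)} = length (filter P (sort (map v ?L)))"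
    by (simp add: length_filter_conv_card)
  also have "\<dots> = size (filter_mset P (mset (sort (map v ?L))))"
    by (metis mset_filter size_mset)
  also have "\<dots> = size (filter_mset P (mset (map v ?L)))" by simp
  also have "\<dots> = length (filter P (map v ?L))" by (metis mset_filter size_mset)
  also have "\<dots> = length (filter (\<lambda>j. P (v j)) ?L)" by (simp add: filter_map comp_def)
  also have "\<dots> = card (set (filter (\<lambda>j. P (v j)) ?L))"
    by (metis distinct_card distinct_filter distinct_sorted_list_of_set)
  also have "set (filter (\<lambda>j. P (v j)) ?L) = {j\<in>J. P (v j)}" using assms by auto
  finally show ?thesis .
qed

lemma kthJ_char:
  assumes fin: "finite J" and k: "1 \<le> k" "k \<le> card J" and P: "\<And>a b. P a \<Longrightarrow> a \<le> b \<Longrightarrow> P b"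
  shows "P (kthJ J v k) \<longleftrightarrow> k \<le> card {j\<in>J. P (v j)}"
proof -
  let ?ys = "sort (map v (sorted_list_of_set J))"
  have len: "length ?ys = card J" using fin by simp
  have "kthJ J v k = ?ys ! (length ?ys - k)"
    unfolding kthJ_def using k len by (subst rev_nth) (auto simp: Suc_diff_Suc)
  then show ?thesis
    using sorted_nth_count[of ?ys k P] k len P count_sort_map[OF fin, of v P] by simp
qed

lemma kthJ_ge: assumes "finite J" "1 \<le> k" "k \<le> card J"
  shows "t \<le> kthJ J v k \<longleftrightarrow> k \<le> card {j\<in>J. t \<le> v j}"
  using kthJ_char[OF assms, of "\<lambda>a. t \<le> a" v] by auto

lemma kthJ_le: assumes "finite J" "1 \<le> k" "k \<le> card J"
  shows "kthJ J v k \<le> t \<longleftrightarrow> card {j\<in>J. t < v j} < k"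
  using kthJ_char[OF assms, of "\<lambda>a. t < a" v] by (auto simp: not_le)

lemma ord_stat_kthJ: "ord_stat n X k \<omega> = kthJ {1..n} (\<lambda>i. X i \<omega>) k"
proof -
  have "sorted_list_of_set {1..n} = [1..<n+1]"
    by (metis atLeastLessThanSuc_atLeastAtMost sorted_list_of_set_range Suc_eq_plus1)
  then show ?thesis by (simp add: ord_stat_def kthJ_def)
qed


lemma card_remove_filter:
  assumes "finite J" "i \<in> J"
  shows "card {j\<in>J - {i}. Q j} = card {j\<in>J. Q j} - (if Q i then 1 else 0)"
proof -
  have "{j\<in>J - {i}. Q j} = {j\<in>J. Q j} - {i}" by auto
  then show ?thesis using assms by (auto simp: card_Diff_singleton)
qed

lemma real_eq_by_le: fixes x y :: real assumes "\<And>t. t \<le> x \<longleftrightarrow> t \<le> y" shows "x = y"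
  using assms[of x] assms[of y] by auto

lemma kthJ_remove:
  assumes fin: "finite J" and i: "i \<in> J" and k: "1 \<le> k" "k + 1 \<le> card J"
  shows "kthJ (J - {i}) v k = (if kthJ J v k \<le> v i then kthJ J v (Suc k) else kthJ J v k)"
proof -
  define a where "a = kthJ J v k"
  define b where "b = kthJ J v (Suc k)"
  define C where "C t = card {j\<in>J. t \<le> v j}" for t
  have cJ: "card (J - {i}) = card J - 1" using fin i by simp
  have ga: "t \<le> a \<longleftrightarrow> k \<le> C t" for t unfolding a_def C_def using kthJ_ge[OF fin k(1)] k by simp
  have gb: "t \<le> b \<longleftrightarrow> Suc k \<le> C t" for t unfolding b_def C_def using kthJ_ge[OF fin, of "Suc k"] k by simp
  have gl: "t \<le> kthJ (J - {i}) v k \<longleftrightarrow> k \<le> C t - (if t \<le> v i then 1 else 0)" for t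
    unfolding C_def using kthJ_ge[of "J - {i}" k t v] fin k cJ card_remove_filter[OF fin i, of "\<lambda>j. t \<le> v j"] by simp
  have Cfin: "finite {j\<in>J. t \<le> v j}" for t using fin by simp
  show ?thesis
  proof (cases "a \<le> v i")
    case True
    have "t \<le> kthJ (J - {i}) v k \<longleftrightarrow> t \<le> b" for t
    proof (cases "t \<le> v i")
      case True
      then show ?thesis using gl[of t] gb[of t] k by auto
    next
      case False
      then have "\<not> t \<le> a" using \<open>a \<le> v i\<close> by simp
      then show ?thesis using gl[of t] gb[of t] ga[of t] False by auto
    qed
    then show ?thesis using True by (simp add: a_def b_def real_eq_by_le)
  next
    case False
    have "t \<le> kthJ (J - {i}) v k \<longleftrightarrow> t \<le> a" for t
    proof (cases "t \<le> v i")
      case True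
      have "insert i {j\<in>J. a \<le> v j} \<subseteq> {j\<in>J. t \<le> v j}" using True False i by auto
      then have "card (insert i {j\<in>J. a \<le> v j}) \<le> C t" unfolding C_def by (intro card_mono Cfin)
      moreover have "card (insert i {j\<in>J. a \<le> v j}) = Suc (C a)" using False fin unfolding C_def by simp
      moreover have "k \<le> C a" using ga[of a] by simp
      ultimately have "Suc k \<le> C t" by simp
      then show ?thesis using gl[of t] ga[of t] True by auto
    next
      case False
      then show ?thesis using gl[of t] ga[of t] by auto
    qed
    then show ?thesis using False by (simp add: a_def real_eq_by_le)
  qed
qed

lemma kthJ_mono: assumes "finite J" "1 \<le> k" "k + 1 \<le> card J"
  shows "kthJ J v (Suc k) \<le> kthJ J v k"
  using kthJ_ge[OF assms(1,2), of "kthJ J v (Suc k)" v] kthJ_ge[OF assms(1), of "Suc k" "kthJ J v (Suc k)" v] assms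
  by simp




lemma main_P:
  fixes \<mu> :: "real measure" and I :: "nat set" and g G :: "(nat \<Rightarrow> real) \<Rightarrow> real"
  assumes ps: "prob_space \<mu>" and fin: "finite I"
    and gm[measurable]: "g \<in> borel_measurable (PiM I (\<lambda>_. \<mu>))"
    and gp: "\<And>x. 0 < g x"
    and gi: "integrable (PiM I (\<lambda>_. \<mu>)) g"
    and gl: "integrable (PiM I (\<lambda>_. \<mu>)) (\<lambda>x. g x * ln (g x))"
    and um: "\<And>j. j \<in> I \<Longrightarrow> u j \<in> borel_measurable (PiM I (\<lambda>_. \<mu>))"
    and up: "\<And>j x. j \<in> I \<Longrightarrow> 0 < u j x \<and> u j x \<le> g x"
    and ui: "\<And>j x z. j \<in> I \<Longrightarrow> u j (x(j := z)) = u j x"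
    and Gm[measurable]: "G \<in> borel_measurable (PiM I (\<lambda>_. \<mu>))"
    and Gp: "\<And>x. 0 \<le> G x"
    and c: "1 \<le> c"
    and pw: "\<And>x. (\<Sum>j\<in>I. psi (g x) (u j x)) \<le> real c * G x"
  shows "ennreal (Ent (PiM I (\<lambda>_. \<mu>)) g) \<le> of_nat c * (\<integral>\<^sup>+x. ennreal (G x) \<partial>PiM I (\<lambda>_. \<mu>))"
proof (cases "(\<integral>\<^sup>+x. ennreal (G x) \<partial>PiM I (\<lambda>_. \<mu>)) = \<infinity>")
  case True
  have "of_nat c * (\<integral>\<^sup>+x. ennreal (G x) \<partial>PiM I (\<lambda>_. \<mu>)) = \<infinity>"
    using True c by (simp add: ennreal_mult_eq_top_iff)
  then show ?thesis by simp
next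
  case False
  let ?P = "PiM I (\<lambda>_. \<mu>)"
  have Gi: "integrable ?P G"
    using False Gp by (intro integrableI_nonneg) (auto simp: less_top)
  have psnn: "0 \<le> psi (g x) (u j x)" if "j \<in> I" for j x using up[OF that, of x] gp[of x] by (intro psi_nonneg) auto
  have ple: "psi (g x) (u j x) \<le> real c * G x" if j: "j \<in> I" for j x
  proof -
    have "psi (g x) (u j x) \<le> (\<Sum>j\<in>I. psi (g x) (u j x))"
      using j fin psnn by (intro member_le_sum) auto
    then show ?thesis using pw[of x] by simp
  qed
  have cGi: "integrable ?P (\<lambda>x. real c * G x)" using Gi by simp
  have psi_i: "integrable ?P (\<lambda>x. psi (g x) (u j x))" if j: "j \<in> I" for j
  proof (rule Bochner_Integration.integrable_bound[OF cGi])
    show "(\<lambda>x. psi (g x) (u j x)) \<in> borel_measurable ?P" using um[OF j] by measurable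
    show "AE x in ?P. norm (psi (g x) (u j x)) \<le> norm (real c * G x)"
      using psnn[OF j] ple[OF j] Gp by (intro AE_I2) simp
  qed
  have "Ent ?P g \<le> (\<Sum>j\<in>I. \<integral>x. psi (g x) (u j x) \<partial>?P)"
    using ps by (intro tens[OF ps fin gm _ gi gl um _ psi_i ui]) (auto simp: gp up)
  also have "\<dots> = (\<integral>x. (\<Sum>j\<in>I. psi (g x) (u j x)) \<partial>?P)"
    using psi_i by (simp add: Bochner_Integration.integral_sum)
  also have "\<dots> \<le> (\<integral>x. real c * G x \<partial>?P)"
    using psi_i cGi pw by (intro integral_mono) auto
  also have "\<dots> = real c * (\<integral>x. G x \<partial>?P)" by simp
  finally have E: "Ent ?P g \<le> real c * (\<integral>x. G x \<partial>?P)" .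
  have "(\<integral>\<^sup>+x. ennreal (G x) \<partial>?P) = ennreal (\<integral>x. G x \<partial>?P)"
    using Gi Gp by (intro nn_integral_eq_integral) auto
  moreover have "0 \<le> (\<integral>x. G x \<partial>?P)" using Gp by simp
  ultimately show ?thesis
    using E by (simp add: ennreal_mult[symmetric] ennreal_of_nat_eq_real_of_nat ennreal_leI)
qed


lemma measurable_kthJ:
  assumes fin: "finite J" "1 \<le> k" "k \<le> card J" and g[measurable]: "\<And>j. j \<in> J \<Longrightarrow> g j \<in> borel_measurable N"
  shows "(\<lambda>\<omega>. kthJ J (\<lambda>j. g j \<omega>) k) \<in> borel_measurable N"
proof (rule borel_measurable_iff_le[THEN iffD2], intro allI)
  fix t
  have c: "real (card {j\<in>J. t < g j \<omega>}) = (\<Sum>j\<in>J. if t < g j \<omega> then 1 else 0)" for \<omega>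
  proof -
    have "real (card {j\<in>J. t < g j \<omega>}) = (\<Sum>j\<in>{j\<in>J. t < g j \<omega>}. 1)" by simp
    also have "\<dots> = (\<Sum>j\<in>J. if t < g j \<omega> then 1 else 0)" using fin(1) by (rule sum.inter_filter)
    finally show ?thesis .
  qed
  have "{\<omega> \<in> space N. kthJ J (\<lambda>j. g j \<omega>) k \<le> t} = {\<omega>\<in>space N. (\<Sum>j\<in>J. if t < g j \<omega> then 1 else 0) < real k}"
    using kthJ_le[OF fin, of "\<lambda>j. g j _" t] c by (auto simp flip: c)
  also have "\<dots> \<in> sets N" by measurable
  finally show "{\<omega> \<in> space N. kthJ J (\<lambda>j. g j \<omega>) k \<le> t} \<in> sets N" .
qed

lemma kthJ_cong: assumes "finite J" "\<And>j. j \<in> J \<Longrightarrow> v j = w j" shows "kthJ J v k = kthJ J w k"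
proof -
  have eq: "map v (sorted_list_of_set J) = map w (sorted_list_of_set J)" using assms by (intro map_cong) auto
  show ?thesis unfolding kthJ_def eq by (rule refl)
qed

lemma psi_exp: "psi (exp A) (exp B) = exp A * (A - B - 1) + exp B" by (simp add: psi_def algebra_simps)

lemma zeta_eq: "exp B * zeta (A - B) = exp A * (A - B - 1) + exp B"
proof -
  have 1: "exp B * exp (A - B) = exp A" by (simp add: exp_diff)
  have 2: "exp A * exp (- (A - B)) = exp B" by (simp add: exp_add[symmetric])
  have "exp B * zeta (A - B) = (exp B * exp (A - B)) * (exp (- (A - B)) + (A - B) - 1)"
    by (simp add: zeta_def phi_def)
  also have "\<dots> = exp A * exp (- (A - B)) + exp A * (A - B - 1)" by (simp only: 1) (simp add: algebra_simps)
  also have "\<dots> = exp A * (A - B - 1) + exp B" by (simp only: 2)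
  finally show ?thesis .
qed

lemma phi_eq: "exp A * phi (B - A) = exp A * (A - B - 1) + exp B"
proof -
  have "exp A * exp (B - A) = exp B" by (simp add: exp_diff)
  then show ?thesis unfolding phi_def by (simp add: algebra_simps)
qed

lemma phi_nonneg: "0 \<le> phi x" unfolding phi_def using exp_ge_add_one_self[of x] by linarith
lemma zeta_nonneg: "0 \<le> zeta x" unfolding zeta_def using phi_nonneg by simp

lemma sum_if_card: "finite I \<Longrightarrow> (\<Sum>j\<in>I. if Q j then T else 0) = real (card {j\<in>I. Q j}) * T"
  by (simp add: sum.inter_filter[symmetric])

lemma pw1:
  fixes x :: "nat \<Rightarrow> real"
  assumes fin: "finite I" and k: "1 \<le> k" "k + 1 \<le> card I"
  shows "(\<Sum>j\<in>I. psi (exp (l * kthJ I x k)) (exp (l * kthJ (I - {j}) x k)))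
     \<le> real k * (exp (l * kthJ I x (Suc k)) * zeta (l * (kthJ I x k - kthJ I x (Suc k))))"
proof -
  define a where "a = kthJ I x k"
  define b where "b = kthJ I x (Suc k)"
  define T where "T = psi (exp (l * a)) (exp (l * b))"
  have ba: "b \<le> a" unfolding a_def b_def by (rule kthJ_mono[OF fin k])
  have T: "T = exp (l * b) * zeta (l * (a - b))"
    unfolding T_def psi_exp using zeta_eq[of "l*b" "l*a"] by (simp add: right_diff_distrib)
  have Tn: "0 \<le> T" unfolding T_def by (rule psi_nonneg) auto
  have "(\<Sum>j\<in>I. psi (exp (l * a)) (exp (l * kthJ (I - {j}) x k))) = (\<Sum>j\<in>I. if a \<le> x j then T else 0)"
  proof (rule sum.cong[OF refl])
    fix j assume j: "j \<in> I"
    show "psi (exp (l * a)) (exp (l * kthJ (I - {j}) x k)) = (if a \<le> x j then T else 0)"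
      using kthJ_remove[OF fin j k, of x] by (simp add: a_def[symmetric] b_def[symmetric] T_def psi_def)
  qed
  also have "\<dots> = real (card {j\<in>I. a \<le> x j}) * T" by (rule sum_if_card[OF fin])
  also have "\<dots> \<le> real k * T"
  proof (cases "a \<le> b")
    case True
    then have "a = b" using ba by simp
    then have "T = 0" unfolding T_def by (simp add: psi_def)
    then show ?thesis by simp
  next
    case False
    have "\<not> Suc k \<le> card {j\<in>I. a \<le> x j}" using kthJ_ge[OF fin, of "Suc k" a x] k False by (simp add: b_def)
    then show ?thesis using Tn by (intro mult_right_mono) auto
  qed
  finally show ?thesis by (simp add: a_def b_def T)
qed

lemma pw2:
  fixes x :: "nat \<Rightarrow> real"
  assumes fin: "finite I" and k: "2 \<le> k" "k \<le> card I"
  shows "(\<Sum>j\<in>I. psi (exp (- l * kthJ I x k)) (exp (- l * kthJ (I - {j}) x (k - 1))))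
     \<le> real (card I - k + 1) * (exp (- l * kthJ I x k) * phi (- l * (kthJ I x (k - 1) - kthJ I x k)))"
proof -
  define m where "m = k - 1"
  have km: "k = Suc m" using k by (simp add: m_def)
  define a where "a = kthJ I x k"
  define c where "c = kthJ I x m"
  define T where "T = psi (exp (- l * a)) (exp (- l * c))"
  have k1: "1 \<le> m" "m + 1 \<le> card I" using k by (auto simp: m_def)
  have T: "T = exp (- l * a) * phi (- l * (c - a))"
    unfolding T_def psi_exp using phi_eq[of "- l * a" "- l * c"] by (simp add: algebra_simps)
  have Tn: "0 \<le> T" unfolding T_def by (rule psi_nonneg) auto
  have "(\<Sum>j\<in>I. psi (exp (- l * a)) (exp (- l * kthJ (I - {j}) x m))) = (\<Sum>j\<in>I. if \<not> c \<le> x j then T else 0)"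
  proof (rule sum.cong[OF refl])
    fix j assume j: "j \<in> I"
    have r: "kthJ (I - {j}) x m = (if c \<le> x j then a else c)"
      unfolding a_def c_def km using kthJ_remove[OF fin j k1, of x] .
    show "psi (exp (- l * a)) (exp (- l * kthJ (I - {j}) x m)) = (if \<not> c \<le> x j then T else 0)"
      unfolding r by (cases "c \<le> x j") (simp_all add: T_def psi_def)
  qed
  also have "\<dots> = real (card {j\<in>I. \<not> c \<le> x j}) * T" by (rule sum_if_card[OF fin])
  also have "\<dots> \<le> real (card I - k + 1) * T"
  proof -
    have ge: "m \<le> card {j\<in>I. c \<le> x j}" using kthJ_ge[OF fin k1(1), of "c" x] k1 by (simp add: c_def)
    have "{j\<in>I. \<not> c \<le> x j} = I - {j\<in>I. c \<le> x j}" by auto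
    then have "card {j\<in>I. \<not> c \<le> x j} = card I - card {j\<in>I. c \<le> x j}" using fin by (simp add: card_Diff_subset)
    then have "card {j\<in>I. \<not> c \<le> x j} \<le> card I - k + 1" using ge k km by simp
    then show ?thesis using Tn by (intro mult_right_mono) auto
  qed
  finally show ?thesis unfolding m_def[symmetric] by (simp add: a_def c_def T)
qed


lemma transfer_setup:
  fixes M :: "'a measure" and X :: "nat \<Rightarrow> 'a \<Rightarrow> real" and n :: nat
  assumes "prob_space M"
    and rv: "\<And>i. i \<in> {1..n} \<Longrightarrow> X i \<in> borel_measurable M"
    and indep: "prob_space.indep_vars M (\<lambda>_. borel) X {1..n}"
    and ident: "\<And>i. i \<in> {1..n} \<Longrightarrow> distr M borel (X i) = distr M borel (X 1)"
    and n: "1 \<le> n"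
  shows "(\<lambda>\<omega>. \<lambda>i\<in>{1..n}. X i \<omega>) \<in> measurable M (PiM {1..n} (\<lambda>_. distr M borel (X 1)))"
    and "distr M (PiM {1..n} (\<lambda>_. distr M borel (X 1))) (\<lambda>\<omega>. \<lambda>i\<in>{1..n}. X i \<omega>) = PiM {1..n} (\<lambda>_. distr M borel (X 1))"
    and "prob_space (distr M borel (X 1))"
proof -
  interpret prob_space M by fact
  let ?I = "{1..n}" let ?\<mu> = "distr M borel (X 1)"
  show Xm: "(\<lambda>\<omega>. \<lambda>i\<in>?I. X i \<omega>) \<in> measurable M (PiM ?I (\<lambda>_. ?\<mu>))"
    using rv by (intro measurable_restrict) simp
  have "distr M (PiM ?I (\<lambda>_. borel)) (\<lambda>\<omega>. \<lambda>i\<in>?I. X i \<omega>) = PiM ?I (\<lambda>i. distr M borel (X i))"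
  proof -
    have ne: "?I \<noteq> {}" using n by auto
    have iff: "indep_vars (\<lambda>_. borel) X ?I \<longleftrightarrow>
      distr M (PiM ?I (\<lambda>_. borel)) (\<lambda>\<omega>. \<lambda>i\<in>?I. X i \<omega>) = PiM ?I (\<lambda>i. distr M borel (X i))"
      by (rule indep_vars_iff_distr_eq_PiM'[OF ne]) (rule rv)
    show ?thesis by (rule iff[THEN iffD1, OF indep])
  qed
  also have "\<dots> = PiM ?I (\<lambda>_. ?\<mu>)" by (rule PiM_cong[OF refl ident])
  finally have e: "distr M (PiM ?I (\<lambda>_. borel)) (\<lambda>\<omega>. \<lambda>i\<in>?I. X i \<omega>) = PiM ?I (\<lambda>_. ?\<mu>)" .
  have "distr M (PiM ?I (\<lambda>_. ?\<mu>)) (\<lambda>\<omega>. \<lambda>i\<in>?I. X i \<omega>) = distr M (PiM ?I (\<lambda>_. borel)) (\<lambda>\<omega>. \<lambda>i\<in>?I. X i \<omega>)"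
    by (intro distr_cong refl sets_PiM_cong) auto
  then show "distr M (PiM ?I (\<lambda>_. ?\<mu>)) (\<lambda>\<omega>. \<lambda>i\<in>?I. X i \<omega>) = PiM ?I (\<lambda>_. ?\<mu>)" using e by simp
  show "prob_space ?\<mu>" using rv n by (intro prob_space_distr) auto
qed

lemma ord_stat_restrict: "ord_stat n X j \<omega> = kthJ {1..n} (\<lambda>i\<in>{1..n}. X i \<omega>) j"
  unfolding ord_stat_kthJ by (rule kthJ_cong) auto

theorem proposition1:
  fixes M :: "'a measure" and X :: "nat \<Rightarrow> 'a \<Rightarrow> real" and n :: nat
  assumes "prob_space M"
    and rv: "\<And>i. i \<in> {1..n} \<Longrightarrow> X i \<in> borel_measurable M"
    and indep: "prob_space.indep_vars M (\<lambda>_. borel) X {1..n}"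
    and ident: "\<And>i. i \<in> {1..n} \<Longrightarrow> distr M borel (X i) = distr M borel (X 1)"
    and cont: "\<And>x. measure M {\<omega> \<in> space M. X 1 \<omega> = x} = 0"
  shows
    "(\<forall>l::real. \<forall>k\<in>{1..n-1}. l \<ge> 0 \<longrightarrow>
        integrable M (\<lambda>\<omega>. exp (l * ord_stat n X k \<omega>)) \<longrightarrow>
        integrable M (\<lambda>\<omega>. exp (l * ord_stat n X k \<omega>) * ln (exp (l * ord_stat n X k \<omega>))) \<longrightarrow>
        ennreal (Ent M (\<lambda>\<omega>. exp (l * ord_stat n X k \<omega>)))
          \<le> of_nat k * (\<integral>\<^sup>+\<omega>. ennreal (exp (l * ord_stat n X (k+1) \<omega>)
                                          * zeta (l * spacing n X k \<omega>)) \<partial>M))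
   \<and> (\<forall>l::real. \<forall>k\<in>{2..n}. l \<ge> 0 \<longrightarrow>
        integrable M (\<lambda>\<omega>. exp (- l * ord_stat n X k \<omega>)) \<longrightarrow>
        integrable M (\<lambda>\<omega>. exp (- l * ord_stat n X k \<omega>) * ln (exp (- l * ord_stat n X k \<omega>))) \<longrightarrow>
        ennreal (Ent M (\<lambda>\<omega>. exp (- l * ord_stat n X k \<omega>)))
          \<le> of_nat (n - k + 1) * (\<integral>\<^sup>+\<omega>. ennreal (exp (- l * ord_stat n X k \<omega>)
                                          * phi (- l * spacing n X (k - 1) \<omega>)) \<partial>M))"
proof -
  let ?I = "{1..n}"
  let ?\<mu> = "distr M borel (X 1)"
  let ?P = "PiM ?I (\<lambda>_. ?\<mu>)"
  let ?Xv = "\<lambda>\<omega>. \<lambda>i\<in>?I. X i \<omega>"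
  have fin: "finite ?I" by simp
  have cI: "card ?I = n" by simp
  have compm[measurable]: "(\<lambda>x. x j) \<in> borel_measurable ?P" if "j \<in> ?I" for j
    using measurable_component_singleton[OF that, of "\<lambda>_. ?\<mu>"] by simp
  have kth_m: "(\<lambda>x. kthJ J x j) \<in> borel_measurable ?P" if "J \<subseteq> ?I" "1 \<le> j" "j \<le> card J" for J j
  proof -
    have "\<And>i. i \<in> J \<Longrightarrow> (\<lambda>x. x i) \<in> borel_measurable ?P" using that(1) compm by blast
    from measurable_kthJ[OF finite_subset[OF that(1) fin] that(2,3) this] show ?thesis by simp
  qed
  have S: "(\<lambda>\<omega>. ?Xv \<omega>) \<in> measurable M ?P \<and> distr M ?P ?Xv = ?P \<and> prob_space ?\<mu>" if "1 \<le> n"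
    using transfer_setup[OF assms(1) rv indep ident that] by blast
  have TR: "Ent M (\<lambda>\<omega>. g (?Xv \<omega>)) = Ent ?P g \<and>
      (integrable M (\<lambda>\<omega>. g (?Xv \<omega>)) \<longrightarrow> integrable ?P g) \<and>
      (integrable M (\<lambda>\<omega>. g (?Xv \<omega>) * ln (g (?Xv \<omega>))) \<longrightarrow> integrable ?P (\<lambda>x. g x * ln (g x))) \<and>
      (\<integral>\<^sup>+\<omega>. ennreal (G (?Xv \<omega>)) \<partial>M) = (\<integral>\<^sup>+x. ennreal (G x) \<partial>?P)"
    if n1: "1 \<le> n" and gm[measurable]: "g \<in> borel_measurable ?P" and Gm[measurable]: "G \<in> borel_measurable ?P" for g G
  proof -
    have Xm[measurable]: "?Xv \<in> measurable M ?P" and D: "distr M ?P ?Xv = ?P" using S[OF n1] by auto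
    have i1: "(\<integral>\<omega>. g (?Xv \<omega>) \<partial>M) = (\<integral>x. g x \<partial>?P)"
      using integral_distr[OF Xm gm] D by simp
    have glm: "(\<lambda>x. g x * ln (g x)) \<in> borel_measurable ?P" by measurable
    have i2: "(\<integral>\<omega>. g (?Xv \<omega>) * ln (g (?Xv \<omega>)) \<partial>M) = (\<integral>x. g x * ln (g x) \<partial>?P)"
      using integral_distr[OF Xm glm] D by simp
    have a1: "Ent M (\<lambda>\<omega>. g (?Xv \<omega>)) = Ent ?P g" unfolding Ent_def i1 i2 by (rule refl)
    have a2: "integrable M (\<lambda>\<omega>. g (?Xv \<omega>)) \<longrightarrow> integrable ?P g"
      using integrable_distr_eq[OF Xm gm] D by simp
    have a3: "integrable M (\<lambda>\<omega>. g (?Xv \<omega>) * ln (g (?Xv \<omega>))) \<longrightarrow> integrable ?P (\<lambda>x. g x * ln (g x))"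
      using integrable_distr_eq[OF Xm glm] D by simp
    have a4: "(\<integral>\<^sup>+\<omega>. ennreal (G (?Xv \<omega>)) \<partial>M) = (\<integral>\<^sup>+x. ennreal (G x) \<partial>?P)"
    proof -
      have Gem: "(\<lambda>x. ennreal (G x)) \<in> borel_measurable ?P" by measurable
      show ?thesis using nn_integral_distr[OF Xm, of "\<lambda>x. ennreal (G x)"] D Gem by simp
    qed
    show ?thesis by (intro conjI a1 a2 a3 a4)
  qed
  show ?thesis
  proof (intro conjI allI ballI impI)
    fix l :: real and k assume k: "k \<in> {1..n-1}" and l: "0 \<le> l"
      and int1: "integrable M (\<lambda>\<omega>. exp (l * ord_stat n X k \<omega>))"
      and int2: "integrable M (\<lambda>\<omega>. exp (l * ord_stat n X k \<omega>) * ln (exp (l * ord_stat n X k \<omega>)))"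
    have n1: "1 \<le> n" and k1: "1 \<le> k" "k + 1 \<le> card ?I" using k by auto
    define g where "g = (\<lambda>x. exp (l * kthJ ?I x k))"
    define G where "G = (\<lambda>x. exp (l * kthJ ?I x (k+1)) * zeta (l * (kthJ ?I x k - kthJ ?I x (k+1))))"
    define u where "u = (\<lambda>j x. exp (l * kthJ (?I - {j}) x k))"
    have km[measurable]: "(\<lambda>x. kthJ ?I x k) \<in> borel_measurable ?P" using kth_m[of ?I k] k1 by simp
    have km2[measurable]: "(\<lambda>x. kthJ ?I x (k+1)) \<in> borel_measurable ?P" using kth_m[of ?I "k+1"] k1 by simp
    have gm: "g \<in> borel_measurable ?P" unfolding g_def by measurable
    have Gm: "G \<in> borel_measurable ?P" unfolding G_def zeta_def phi_def by measurable
    note T = TR[OF n1 gm Gm]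
    have lhs: "Ent M (\<lambda>\<omega>. exp (l * ord_stat n X k \<omega>)) = Ent M (\<lambda>\<omega>. g (?Xv \<omega>))"
      unfolding g_def ord_stat_restrict by (rule refl)
    have rhs: "(\<integral>\<^sup>+\<omega>. ennreal (exp (l * ord_stat n X (k+1) \<omega>) * zeta (l * spacing n X k \<omega>)) \<partial>M)
        = (\<integral>\<^sup>+\<omega>. ennreal (G (?Xv \<omega>)) \<partial>M)"
      unfolding G_def spacing_def ord_stat_restrict by (rule refl)
    have "integrable M (\<lambda>\<omega>. g (?Xv \<omega>))" using int1 unfolding g_def ord_stat_restrict .
    then have gi: "integrable ?P g" using T by (rule_tac mp) blast+
    have "integrable M (\<lambda>\<omega>. g (?Xv \<omega>) * ln (g (?Xv \<omega>)))" using int2 unfolding g_def ord_stat_restrict .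
    then have gl: "integrable ?P (\<lambda>x. g x * ln (g x))" using T by (rule_tac mp) blast+
    have umeas: "u j \<in> borel_measurable ?P" if j: "j \<in> ?I" for j
    proof -
      have "(\<lambda>x. kthJ (?I - {j}) x k) \<in> borel_measurable ?P" using kth_m[of "?I - {j}" k] k1 j by auto
      then show ?thesis unfolding u_def by measurable
    qed
    have up: "0 < u j x \<and> u j x \<le> g x" if j: "j \<in> ?I" for j x
    proof -
      have "kthJ (?I - {j}) x k \<le> kthJ ?I x k"
        using kthJ_remove[OF fin j k1, of x] kthJ_mono[OF fin k1, of x] by auto
      from mult_left_mono[OF this l] show ?thesis unfolding u_def g_def by simp
    qed
    have ui: "u j (x(j := z)) = u j x" if "j \<in> ?I" for j x z
      unfolding u_def by (subst kthJ_cong[of "?I - {j}" "x(j := z)" x]) auto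
    have Gp: "0 \<le> G x" for x unfolding G_def using zeta_nonneg by simp
    have pw: "(\<Sum>j\<in>?I. psi (g x) (u j x)) \<le> real k * G x" for x
      using pw1[OF fin k1, where x=x and l=l] unfolding g_def u_def G_def by simp
    have "ennreal (Ent ?P g) \<le> of_nat k * (\<integral>\<^sup>+x. ennreal (G x) \<partial>?P)"
      by (rule main_P[OF conjunct2[OF conjunct2[OF S[OF n1]]] fin gm _ gi gl umeas up ui Gm Gp k1(1) pw]) (simp add: g_def)
    then show "ennreal (Ent M (\<lambda>\<omega>. exp (l * ord_stat n X k \<omega>)))
          \<le> of_nat k * (\<integral>\<^sup>+\<omega>. ennreal (exp (l * ord_stat n X (k+1) \<omega>) * zeta (l * spacing n X k \<omega>)) \<partial>M)"
      unfolding lhs rhs using T by simp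
  next
    fix l :: real and k assume k: "k \<in> {2..n}" and l: "0 \<le> l"
      and int1: "integrable M (\<lambda>\<omega>. exp (- l * ord_stat n X k \<omega>))"
      and int2: "integrable M (\<lambda>\<omega>. exp (- l * ord_stat n X k \<omega>) * ln (exp (- l * ord_stat n X k \<omega>)))"
    have n1: "1 \<le> n" and k2: "2 \<le> k" "k \<le> card ?I" using k by auto
    have k1: "1 \<le> k - 1" "k - 1 + 1 \<le> card ?I" "1 \<le> k" using k by auto
    define g where "g = (\<lambda>x. exp (- l * kthJ ?I x k))"
    define G where "G = (\<lambda>x. exp (- l * kthJ ?I x k) * phi (- l * (kthJ ?I x (k - 1) - kthJ ?I x k)))"
    define u where "u = (\<lambda>j x. exp (- l * kthJ (?I - {j}) x (k - 1)))"
    have km[measurable]: "(\<lambda>x. kthJ ?I x k) \<in> borel_measurable ?P" using kth_m[of ?I k] k2 by simp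
    have km2[measurable]: "(\<lambda>x. kthJ ?I x (k - 1)) \<in> borel_measurable ?P" using kth_m[of ?I "k - 1"] k2 by simp
    have gm: "g \<in> borel_measurable ?P" unfolding g_def by measurable
    have Gm: "G \<in> borel_measurable ?P" unfolding G_def phi_def by measurable
    note T = TR[OF n1 gm Gm]
    have lhs: "Ent M (\<lambda>\<omega>. exp (- l * ord_stat n X k \<omega>)) = Ent M (\<lambda>\<omega>. g (?Xv \<omega>))"
      unfolding g_def ord_stat_restrict by (rule refl)
    have kk: "k - 1 + 1 = k" using k2 by simp
    have rhs: "(\<integral>\<^sup>+\<omega>. ennreal (exp (- l * ord_stat n X k \<omega>) * phi (- l * spacing n X (k - 1) \<omega>)) \<partial>M)
        = (\<integral>\<^sup>+\<omega>. ennreal (G (?Xv \<omega>)) \<partial>M)"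
      unfolding G_def spacing_def ord_stat_restrict kk by (rule refl)
    have "integrable M (\<lambda>\<omega>. g (?Xv \<omega>))" using int1 unfolding g_def ord_stat_restrict .
    then have gi: "integrable ?P g" using T by (rule_tac mp) blast+
    have "integrable M (\<lambda>\<omega>. g (?Xv \<omega>) * ln (g (?Xv \<omega>)))" using int2 unfolding g_def ord_stat_restrict .
    then have gl: "integrable ?P (\<lambda>x. g x * ln (g x))" using T by (rule_tac mp) blast+
    have umeas: "u j \<in> borel_measurable ?P" if j: "j \<in> ?I" for j
    proof -
      have "(\<lambda>x. kthJ (?I - {j}) x (k - 1)) \<in> borel_measurable ?P" using kth_m[of "?I - {j}" "k - 1"] k2 j by auto
      then show ?thesis unfolding u_def by measurable
    qed
    have up: "0 < u j x \<and> u j x \<le> g x" if j: "j \<in> ?I" for j x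
    proof -
      have r: "kthJ (?I - {j}) x (k - 1) = (if kthJ ?I x (k - 1) \<le> x j then kthJ ?I x k else kthJ ?I x (k - 1))"
        using kthJ_remove[OF fin j k1(1,2), of x] kk by simp
      have "kthJ ?I x k \<le> kthJ ?I x (k - 1)" using kthJ_mono[OF fin k1(1,2), of x] kk by simp
      then have "kthJ ?I x k \<le> kthJ (?I - {j}) x (k - 1)" using r by auto
      from mult_left_mono[OF this l] show ?thesis unfolding u_def g_def by simp
    qed
    have ui: "u j (x(j := z)) = u j x" if "j \<in> ?I" for j x z
      unfolding u_def by (subst kthJ_cong[of "?I - {j}" "x(j := z)" x]) auto
    have Gp: "0 \<le> G x" for x unfolding G_def using phi_nonneg by simp
    have pw: "(\<Sum>j\<in>?I. psi (g x) (u j x)) \<le> real (n - k + 1) * G x" for x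
      unfolding g_def u_def G_def using pw2[OF fin k2, where x=x and l=l] by simp
    have c1: "1 \<le> n - k + 1" by simp
    have "ennreal (Ent ?P g) \<le> of_nat (n - k + 1) * (\<integral>\<^sup>+x. ennreal (G x) \<partial>?P)"
      by (rule main_P[OF conjunct2[OF conjunct2[OF S[OF n1]]] fin gm _ gi gl umeas up ui Gm Gp c1 pw]) (simp add: g_def)
    then show "ennreal (Ent M (\<lambda>\<omega>. exp (- l * ord_stat n X k \<omega>)))
          \<le> of_nat (n - k + 1) * (\<integral>\<^sup>+\<omega>. ennreal (exp (- l * ord_stat n X k \<omega>) * phi (- l * spacing n X (k - 1) \<omega>)) \<partial>M)"
      unfolding lhs rhs using T by simp
  qed
qed


end
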